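(* Let $H$ be a connected graph and let $v\in \mathrm{MS}(H)$. Then every loopless connected component of $H|v$ consists of a single isolated vertex.
   Context: Graphs are finite, may have loops, but no multiple edges; an edge is either $\{u\}$ (a loop at $u$) or $\{u,w\}$ with $u\ne w$. A vertex is isolated if no edge (including a loop) is incident to it. A graph is loopless if no vertex is looped. For $v\in V(H)$, $N_H(v)=\{u\in V(H): u\neq v,\ \{u,v\}\in E(H)\}$. Let $L$ be the set of looped vertices; $N^l_H(v)=N_H(v)\cap L$ and $N^{ul}_H(v)=N_H(v)\setminus L$. Define $s(v)=|N^{ul}_H(v)|-|N^l_H(v)|$, and let $\mathrm{MS}(H)$ be the set of looped vertices $v$ of $H$ such that $s(w)\le s(v)$ for all $w\in N^l_H(v)$. For a looped vertex $v$, the local complement $H*v$ is the graph on $V(H)$ such that for every $p\subseteq V(H)$ with $|p|\in\{1,2\}$: $p\in E(H*v)$ iff either ($p\notin E(H)$ and $p\subseteq N_H(v)$) or ($p\in E(H)$ and $p\not\subseteq N_H(v)$). $H*_c v$ is obtained from $H*v$ by removing all edges incident to $v$, including its loop; $H|v$ is obtained from $H*_c v$ by deleting the vertex $v$. *)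

theory Defs
  imports Main
begin

text \<open>A graph is given by a finite vertex set V and a set E of edges, each edge
being a set of 1 (loop) or 2 vertices of V.\<close>

definition graph :: "'a set \<Rightarrow> 'a set set \<Rightarrow> bool" where
  "graph V E \<longleftrightarrow> finite V \<and> (\<forall>e\<in>E. e \<subseteq> V \<and> (card e = 1 \<or> card e = 2))"

definition looped :: "'a set set \<Rightarrow> 'a \<Rightarrow> bool" where
  "looped E u \<longleftrightarrow> {u} \<in> E"

definition loopset :: "'a set \<Rightarrow> 'a set set \<Rightarrow> 'a set" where
  "loopset V E = {u\<in>V. looped E u}"

definition isolated :: "'a set set \<Rightarrow> 'a \<Rightarrow> bool" where
  "isolated E u \<longleftrightarrow> (\<forall>e\<in>E. u \<notin> e)"

definition nbhd :: "'a set \<Rightarrow> 'a set set \<Rightarrow> 'a \<Rightarrow> 'a set" where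
  "nbhd V E v = {u\<in>V. u \<noteq> v \<and> {u, v} \<in> E}"

definition nbhd_l :: "'a set \<Rightarrow> 'a set set \<Rightarrow> 'a \<Rightarrow> 'a set" where
  "nbhd_l V E v = nbhd V E v \<inter> loopset V E"

definition nbhd_ul :: "'a set \<Rightarrow> 'a set set \<Rightarrow> 'a \<Rightarrow> 'a set" where
  "nbhd_ul V E v = nbhd V E v - loopset V E"

definition sval :: "'a set \<Rightarrow> 'a set set \<Rightarrow> 'a \<Rightarrow> int" where
  "sval V E v = int (card (nbhd_ul V E v)) - int (card (nbhd_l V E v))"

definition MS :: "'a set \<Rightarrow> 'a set set \<Rightarrow> 'a set" where
  "MS V E = {v \<in> loopset V E. \<forall>w\<in>nbhd_l V E v. sval V E w \<le> sval V E v}"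

definition local_compl :: "'a set \<Rightarrow> 'a set set \<Rightarrow> 'a \<Rightarrow> 'a set set" where
  "local_compl V E v = {p. p \<subseteq> V \<and> (card p = 1 \<or> card p = 2) \<and>
     ((p \<notin> E \<and> p \<subseteq> nbhd V E v) \<or> (p \<in> E \<and> \<not> p \<subseteq> nbhd V E v))}"

definition local_compl_c :: "'a set \<Rightarrow> 'a set set \<Rightarrow> 'a \<Rightarrow> 'a set set" where
  "local_compl_c V E v = {p \<in> local_compl V E v. v \<notin> p}"

text \<open>H|v: delete v from H *_c v. Vertex set V - {v}, edge set as above.\<close>
definition pivot_del_V :: "'a set \<Rightarrow> 'a \<Rightarrow> 'a set" where
  "pivot_del_V V v = V - {v}"

definition pivot_del_E :: "'a set \<Rightarrow> 'a set set \<Rightarrow> 'a \<Rightarrow> 'a set set" where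
  "pivot_del_E V E v = local_compl_c V E v"

definition adj :: "'a set set \<Rightarrow> 'a \<Rightarrow> 'a \<Rightarrow> bool" where
  "adj E u w \<longleftrightarrow> u \<noteq> w \<and> {u, w} \<in> E"

definition reachable :: "'a set \<Rightarrow> 'a set set \<Rightarrow> 'a \<Rightarrow> 'a \<Rightarrow> bool" where
  "reachable V E u w \<longleftrightarrow> u \<in> V \<and> w \<in> V \<and> (\<lambda>x y. x \<in> V \<and> y \<in> V \<and> adj E x y)\<^sup>*\<^sup>* u w"

definition connected_graph :: "'a set \<Rightarrow> 'a set set \<Rightarrow> bool" where
  "connected_graph V E \<longleftrightarrow> V \<noteq> {} \<and> (\<forall>u\<in>V. \<forall>w\<in>V. reachable V E u w)"

definition components :: "'a set \<Rightarrow> 'a set set \<Rightarrow> 'a set set" where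
  "components V E = {{w. reachable V E u w} | u. u \<in> V}"

definition loopless_set :: "'a set set \<Rightarrow> 'a set \<Rightarrow> bool" where
  "loopless_set E C \<longleftrightarrow> (\<forall>u\<in>C. \<not> looped E u)"

end

theory Submission
  imports Defs
begin

lemma F1:
  assumes "x \<in> V" "y \<in> V" "x \<noteq> y" "x \<noteq> v" "y \<noteq> v"
  shows "({x,y} \<in> pivot_del_E V E v) = (({x,y} \<in> E) \<noteq> (x \<in> nbhd V E v \<and> y \<in> nbhd V E v))"
  using assms unfolding pivot_del_E_def local_compl_c_def local_compl_def by auto

lemma F2:
  assumes "x \<in> V" "x \<noteq> v"
  shows "({x} \<in> pivot_del_E V E v) = (({x} \<in> E) \<noteq> (x \<in> nbhd V E v))"
  using assms unfolding pivot_del_E_def local_compl_c_def local_compl_def by auto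

lemma F3:
  assumes "e \<in> pivot_del_E V E v"
  shows "e \<subseteq> V - {v} \<and> ((\<exists>x. e = {x}) \<or> (\<exists>x y. x \<noteq> y \<and> e = {x,y}))"
  using assms unfolding pivot_del_E_def local_compl_c_def local_compl_def
  by (auto simp: card_1_singleton_iff card_2_iff)

lemma sym_rtranclp:
  assumes "\<And>x y. r x y \<Longrightarrow> r y x" "r\<^sup>*\<^sup>* a b"
  shows "r\<^sup>*\<^sup>* b a"
  using assms(2)
proof (induction rule: rtranclp_induct)
  case base then show ?case by simp
next
  case (step y z) then show ?case using assms(1) by (meson converse_rtranclp_into_rtranclp)
qed

theorem mainTheorem5:
  fixes V :: "'a set" and E :: "'a set set" and v :: 'a
  assumes "graph V E"
    and "connected_graph V E"
    and "v \<in> MS V E"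
  shows "\<forall>C \<in> components (pivot_del_V V v) (pivot_del_E V E v).
           loopless_set (pivot_del_E V E v) C \<longrightarrow>
           (\<exists>u. C = {u} \<and> isolated (pivot_del_E V E v) u)"
proof (intro ballI impI)
  fix C
  let ?V' = "pivot_del_V V v" and ?E' = "pivot_del_E V E v"
  let ?N = "nbhd V E v"
  let ?R = "\<lambda>x y. x \<in> ?V' \<and> y \<in> ?V' \<and> adj ?E' x y"
  assume "C \<in> components ?V' ?E'" and LL: "loopless_set ?E' C"
  then obtain u where u: "u \<in> ?V'" and Cdef: "C = {w. reachable ?V' ?E' u w}"
    unfolding components_def by auto
  have VE: "finite V" using assms(1) unfolding graph_def by auto
  have vV: "v \<in> V" and vL: "{v} \<in> E" using assms(3) unfolding MS_def loopset_def looped_def by auto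
  have uC: "u \<in> C" using u unfolding Cdef reachable_def by auto
  have Csub: "C \<subseteq> ?V'" unfolding Cdef reachable_def by auto
  have Cstep: "y \<in> C" if "x \<in> C" "y \<in> ?V'" "adj ?E' x y" for x y
    using that unfolding Cdef reachable_def by (auto intro: rtranclp.rtrancl_into_rtrancl)
  have Vsimp: "?V' = V - {v}" unfolding pivot_del_V_def by simp
  have noloopE': "{x} \<notin> ?E'" if "x \<in> C" for x
    using LL that unfolding loopless_set_def looped_def by auto
  have loopC: "{x} \<in> E" if "x \<in> C" "x \<in> ?N" for x
  proof -
    have "x \<in> V" "x \<noteq> v" using that(1) Csub Vsimp by auto
    then show ?thesis using F2[of x V v E] that noloopE' by auto
  qed
  have unloopC: "{x} \<notin> E" if "x \<in> C" "x \<notin> ?N" for x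
  proof -
    have "x \<in> V" "x \<noteq> v" using that(1) Csub Vsimp by auto
    then show ?thesis using F2[of x V v E] that noloopE' by auto
  qed
  have "C \<inter> ?N \<noteq> {}"
  proof
    assume CN: "C \<inter> ?N = {}"
    have "t \<in> C" if "(\<lambda>x y. x \<in> V \<and> y \<in> V \<and> adj E x y)\<^sup>*\<^sup>* u t" for t
      using that
    proof (induction rule: rtranclp_induct)
      case base then show ?case using uC .
    next
      case (step y z)
      have yV': "y \<in> V" "y \<noteq> v" using step.IH Csub Vsimp by auto
      have yN: "y \<notin> ?N" using CN step.IH by auto
      have zv: "z \<noteq> v"
      proof
        assume "z = v"
        then have "y \<in> ?N" using step.hyps(2) yV' unfolding adj_def nbhd_def by (auto simp: insert_commute)
        then show False using yN by simp
      qed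
      then have "{y,z} \<in> ?E'" using F1[of y V z v E] step.hyps(2) yV' yN unfolding adj_def by auto
      then show ?case using Cstep[of y z] step.IH step.hyps(2) zv Vsimp unfolding adj_def by auto
    qed
    moreover have "reachable V E u v" using assms(2) u vV Vsimp unfolding connected_graph_def by auto
    ultimately have "v \<in> C" unfolding reachable_def by auto
    then show False using Csub Vsimp by auto
  qed
  then obtain w where wC: "w \<in> C" and wN: "w \<in> ?N" by auto
  have wV: "w \<in> V" "w \<noteq> v" "{w,v} \<in> E" using wN unfolding nbhd_def by auto
  have wL: "{w} \<in> E" using loopC wC wN by auto
  have wl: "w \<in> nbhd_l V E v" using wN wV wL unfolding nbhd_l_def loopset_def looped_def by auto
  then have sle: "sval V E w \<le> sval V E v" using assms(3) unfolding MS_def by auto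
  define D where "D = {y \<in> ?V'. y \<noteq> w \<and> {w,y} \<in> ?E'}"
  have DC: "D \<subseteq> C" using Cstep wC unfolding D_def adj_def by auto
  have ul: "nbhd_ul V E w = nbhd_ul V E v \<union> (D - ?N)"
  proof (intro equalityI subsetI)
    fix x assume x: "x \<in> nbhd_ul V E w"
    then have xx: "x \<in> V" "x \<noteq> w" "{x,w} \<in> E" "{x} \<notin> E"
      unfolding nbhd_ul_def nbhd_def loopset_def looped_def by auto
    then have xv: "x \<noteq> v" using vL by auto
    show "x \<in> nbhd_ul V E v \<union> (D - ?N)"
    proof (cases "x \<in> ?N")
      case True then show ?thesis using xx unfolding nbhd_ul_def loopset_def looped_def by auto
    next
      case False
      then have "{w,x} \<in> ?E'" using F1[of w V x v E] xx xv wV by (auto simp: insert_commute)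
      then show ?thesis using False xx xv Vsimp unfolding D_def by auto
    qed
  next
    fix x assume x: "x \<in> nbhd_ul V E v \<union> (D - ?N)"
    show "x \<in> nbhd_ul V E w"
    proof (cases "x \<in> nbhd_ul V E v")
      case True
      then have xx: "x \<in> ?N" "x \<in> V" "{x} \<notin> E" "x \<noteq> v"
        unfolding nbhd_ul_def nbhd_def loopset_def looped_def by auto
      have xw: "x \<noteq> w" using xx wL by auto
      have "{w,x} \<in> E"
      proof (rule ccontr)
        assume "{w,x} \<notin> E"
        then have "{w,x} \<in> ?E'" using F1[of w V x v E] xx xw wV wN by auto
        then have "x \<in> D" using xx xw Vsimp unfolding D_def by auto
        then have "{x} \<in> E" using loopC DC xx by auto
        then show False using xx by simp
      qed
      then show ?thesis using xx xw unfolding nbhd_ul_def nbhd_def loopset_def looped_def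
        by (auto simp: insert_commute)
    next
      case False
      then have xD: "x \<in> D" "x \<notin> ?N" using x by auto
      then have xx: "x \<in> V" "x \<noteq> v" "x \<noteq> w" "{w,x} \<in> ?E'" using Vsimp unfolding D_def by auto
      have "{w,x} \<in> E" using F1[of w V x v E] xx wV xD by auto
      moreover have "{x} \<notin> E" using unloopC DC xD by auto
      ultimately show ?thesis using xx unfolding nbhd_ul_def nbhd_def loopset_def looped_def
        by (auto simp: insert_commute)
    qed
  qed
  have l: "nbhd_l V E w = insert v (nbhd_l V E v - {w} - D)"
  proof (intro equalityI subsetI)
    fix x assume x: "x \<in> nbhd_l V E w"
    then have xx: "x \<in> V" "x \<noteq> w" "{x,w} \<in> E" "{x} \<in> E"
      unfolding nbhd_l_def nbhd_def loopset_def looped_def by auto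
    show "x \<in> insert v (nbhd_l V E v - {w} - D)"
    proof (cases "x = v")
      case True then show ?thesis by simp
    next
      case xv: False
      have xN: "x \<in> ?N"
      proof (rule ccontr)
        assume xN: "x \<notin> ?N"
        then have "{w,x} \<in> ?E'" using F1[of w V x v E] xx xv wV by (auto simp: insert_commute)
        then have "x \<in> D" using xx xv Vsimp unfolding D_def by auto
        then have "{x} \<notin> E" using unloopC DC xN by auto
        then show False using xx by simp
      qed
      have "{w,x} \<notin> ?E'" using F1[of w V x v E] xx xv wV xN wN by (auto simp: insert_commute)
      then have "x \<notin> D" unfolding D_def by auto
      then show ?thesis using xx xN unfolding nbhd_l_def loopset_def looped_def by auto
    qed
  next
    fix x assume x: "x \<in> insert v (nbhd_l V E v - {w} - D)"
    show "x \<in> nbhd_l V E w"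
    proof (cases "x = v")
      case True then show ?thesis using vV wV vL unfolding nbhd_l_def nbhd_def loopset_def looped_def
        by (auto simp: insert_commute)
    next
      case xv: False
      then have xx: "x \<in> ?N" "x \<in> V" "{x} \<in> E" "x \<noteq> w" "x \<notin> D" using x
        unfolding nbhd_l_def nbhd_def loopset_def looped_def by auto
      then have "{w,x} \<notin> ?E'" using xv Vsimp unfolding D_def by auto
      then have "{w,x} \<in> E" using F1[of w V x v E] xx xv wV wN by auto
      then show ?thesis using xx unfolding nbhd_l_def nbhd_def loopset_def looped_def
        by (auto simp: insert_commute)
    qed
  qed
  have DNsub: "D \<inter> ?N \<subseteq> nbhd_l V E v - {w}"
  proof
    fix x assume x: "x \<in> D \<inter> ?N"
    then have "{x} \<in> E" "x \<noteq> w" using loopC DC unfolding D_def by auto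
    then show "x \<in> nbhd_l V E v - {w}" using x unfolding nbhd_l_def loopset_def looped_def nbhd_def by auto
  qed
  have finN: "finite (nbhd_ul V E v)" "finite (nbhd_l V E v)" "finite D"
    using VE Csub DC Vsimp unfolding nbhd_ul_def nbhd_l_def nbhd_def
    by (auto intro: finite_subset)
  have lsubN: "nbhd_l V E v \<subseteq> ?N" "nbhd_ul V E v \<subseteq> ?N" unfolding nbhd_l_def nbhd_ul_def by auto
  have vnN: "v \<notin> ?N" unfolding nbhd_def by auto
  have c1: "card (nbhd_ul V E w) = card (nbhd_ul V E v) + card (D - ?N)"
    unfolding ul using finN lsubN by (subst card_Un_disjoint) auto
  have e2: "nbhd_l V E v - {w} - D = (nbhd_l V E v - {w}) - (D \<inter> ?N)" using lsubN by auto
  have c2a: "card (nbhd_l V E v - {w} - D) = card (nbhd_l V E v - {w}) - card (D \<inter> ?N)"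
    unfolding e2 using finN DNsub by (subst card_Diff_subset) (auto intro: finite_subset)
  have c2b: "card (nbhd_l V E v - {w}) = card (nbhd_l V E v) - 1" using wl finN by simp
  have c2c: "card (D \<inter> ?N) \<le> card (nbhd_l V E v - {w})"
    using DNsub finN by (intro card_mono) auto
  have c2d: "card (nbhd_l V E v) \<ge> 1" using wl finN
    by (metis One_nat_def Suc_leI card_gt_0_iff empty_iff)
  have c2: "card (nbhd_l V E w) = 1 + card (nbhd_l V E v - {w} - D)"
  proof -
    have "v \<notin> nbhd_l V E v - {w} - D" using vnN lsubN by auto
    then show ?thesis unfolding l using finN by simp
  qed
  have c3: "card D = card (D - ?N) + card (D \<inter> ?N)"
  proof -
    have "card D = card ((D - ?N) \<union> (D \<inter> ?N))" by (simp only: Un_Diff_Int)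
    also have "\<dots> = card (D - ?N) + card (D \<inter> ?N)"
      using finN by (intro card_Un_disjoint) auto
    finally show ?thesis .
  qed
  have "sval V E w = sval V E v + int (card D)"
    unfolding sval_def using c1 c2 c2a c2b c2c c2d c3 by linarith
  then have "D = {}" using sle finN by auto
  have Cw: "C = {w}"
  proof -
    have symR: "?R y x" if "?R x y" for x y using that unfolding adj_def by (auto simp: insert_commute)
    have "x = w" if "x \<in> C" for x
    proof -
      have "?R\<^sup>*\<^sup>* u x" using that Cdef unfolding reachable_def by auto
      moreover have "?R\<^sup>*\<^sup>* w u" using wC Cdef sym_rtranclp[of ?R u w] symR unfolding reachable_def by auto
      ultimately have "?R\<^sup>*\<^sup>* w x" by auto
      then show "x = w"
      proof (induction rule: rtranclp_induct)
        case base then show ?case by simp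
      next
        case (step y z)
        then have "z \<in> D" unfolding D_def adj_def by auto
        then show ?case using `D = {}` by simp
      qed
    qed
    then show ?thesis using wC by blast
  qed
  have "isolated ?E' w"
    unfolding isolated_def
  proof (intro ballI notI)
    fix e assume e: "e \<in> ?E'" "w \<in> e"
    from F3[OF e(1)] have es: "e \<subseteq> V - {v}" and
      ec: "(\<exists>x. e = {x}) \<or> (\<exists>x y. x \<noteq> y \<and> e = {x,y})" by auto
    show False
    proof (cases "\<exists>x. e = {x}")
      case True
      then have "e = {w}" using e by auto
      then show False using noloopE' wC e by simp
    next
      case False
      then obtain z where "e = {w,z}" "z \<noteq> w" using ec e by auto
      then have "z \<in> D" using es e Vsimp unfolding D_def by auto
      then show False using `D = {}` by simp
    qed
  qed
  then show "\<exists>u. C = {u} \<and> isolated ?E' u" using Cw by auto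
qed

end
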